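(* Let $(V,\mathcal H,\iota,W)$ be a generalized functional theory and $k$ a positive integer. Then $\mathrm{conv}_k(\iota^*(\mathcal P))=\bar\iota^*(\bar{\mathcal P})$, where $\bar\iota:V\to i\mathfrak u(\mathcal H\otimes\mathbb C^k)$, $\bar\iota(v)=\iota(v)\otimes\mathbb 1$, and $\bar{\mathcal P}$ is the set of pure states on $\mathcal H\otimes\mathbb C^k$.
   Context: A generalized functional theory is a tuple $(V,\mathcal H,\iota,W)$ with $V$ a finite-dimensional real vector space, $\mathcal H$ a finite-dimensional complex Hilbert space, $\iota:V\to i\mathfrak u(\mathcal H)$ linear into the Hermitian operators, $W$ Hermitian. Density operators on a Hilbert space $\mathcal K$ are regarded as elements of $(i\mathfrak u(\mathcal K))^*$ via the trace pairing; $\iota^*$ and $\bar\iota^*$ are the dual maps. $\mathcal P$ is the set of pure states (rank-one projectors) on $\mathcal H$. For a subset $X$ of a vector space, $\mathrm{conv}_k(X)=\{\sum_{i=1}^k t_is_i: s_i\in X, t_i\ge0,\sum_i t_i=1\}$. *)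

theory Defs
  imports "HOL-Analysis.Analysis" "Jordan_Normal_Form.Matrix"
begin

text \<open>Hilbert space H = C^n; operators are n x n complex matrices.\<close>

definition mtrace :: "complex mat \<Rightarrow> complex" where
  "mtrace A = (\<Sum>i<dim_row A. A $$ (i, i))"

definition hermitian_mat :: "nat \<Rightarrow> complex mat \<Rightarrow> bool" where
  "hermitian_mat n A \<longleftrightarrow> A \<in> carrier_mat n n \<and>
     (\<forall>i<n. \<forall>j<n. A $$ (j, i) = cnj (A $$ (i, j)))"

definition gen_functional_theory ::
  "nat \<Rightarrow> ('v::euclidean_space \<Rightarrow> complex mat) \<Rightarrow> complex mat \<Rightarrow> bool" where
  "gen_functional_theory n \<iota> W \<longleftrightarrow>
     (\<forall>v. hermitian_mat n (\<iota> v)) \<and>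
     (\<forall>x y. \<iota> (x + y) = \<iota> x + \<iota> y) \<and>
     (\<forall>c x. \<iota> (c *\<^sub>R x) = complex_of_real c \<cdot>\<^sub>m \<iota> x) \<and>
     hermitian_mat n W"

definition pure_states :: "nat \<Rightarrow> complex mat set" where
  "pure_states m = {mat m m (\<lambda>(i, j). \<psi> $ i * cnj (\<psi> $ j)) | \<psi>.
       \<psi> \<in> carrier_vec m \<and> (\<Sum>i<m. (cmod (\<psi> $ i))\<^sup>2) = 1}"

text \<open>Dual map iota^*: a density operator rho is sent to the functional
v \<mapsto> tr(rho iota(v)) on V (real, since both are Hermitian).\<close>

definition dual_map :: "('v \<Rightarrow> complex mat) \<Rightarrow> complex mat \<Rightarrow> ('v \<Rightarrow> real)" where
  "dual_map \<iota> \<rho> = (\<lambda>v. Re (mtrace (\<rho> * \<iota> v)))"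

text \<open>A \<otimes> 1 on C^n \<otimes> C^k = C^(n k), basis e_a \<otimes> e_i indexed by a * k + i.\<close>

definition tensor_id :: "nat \<Rightarrow> complex mat \<Rightarrow> complex mat" where
  "tensor_id k A = mat (dim_row A * k) (dim_col A * k)
     (\<lambda>(p, q). if p mod k = q mod k then A $$ (p div k, q div k) else 0)"

definition conv_k :: "nat \<Rightarrow> ('v \<Rightarrow> real) set \<Rightarrow> ('v \<Rightarrow> real) set" where
  "conv_k k X = {f. \<exists>s t. (\<forall>i<k. s i \<in> X \<and> t i \<ge> 0) \<and> (\<Sum>i<k. t i) = 1 \<and>
       f = (\<lambda>v. \<Sum>i<k. t i * s i v)}"

end

theory Submission
  imports Defs
begin

definition Q :: "nat \<Rightarrow> (nat \<Rightarrow> complex) \<Rightarrow> complex mat \<Rightarrow> complex" where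
  "Q n \<phi> A = (\<Sum>a<n. \<Sum>b<n. \<phi> a * cnj (\<phi> b) * A $$ (b, a))"

lemma sum_reindex_mult:
  fixes f :: "nat \<Rightarrow> 'a::comm_monoid_add"
  shows "(\<Sum>p<n*k. f p) = (\<Sum>a<n. \<Sum>i<k. f (a*k+i))"
proof (induction n)
  case 0 then show ?case by simp
next
  case (Suc n)
  have "{..<Suc n * k} = {..<n*k} \<union> {n*k..<n*k+k}" by auto
  then have "(\<Sum>p<Suc n*k. f p) = (\<Sum>p<n*k. f p) + (\<Sum>p\<in>{n*k..<n*k+k}. f p)"
    by (simp add: sum.union_disjoint ivl_disj_int)
  also have "(\<Sum>p\<in>{n*k..<n*k+k}. f p) = (\<Sum>i<k. f (n*k+i))"
    using sum.shift_bounds_nat_ivl[of f 0 "n*k" k] by (simp add: lessThan_atLeast0 add.commute)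
  finally show ?case using Suc by simp
qed

lemma trace_pure:
  assumes "A \<in> carrier_mat m m"
  shows "mtrace (mat m m (\<lambda>(i,j). \<psi> $ i * cnj (\<psi> $ j)) * A) =
     (\<Sum>p<m. \<Sum>q<m. \<psi> $ p * cnj (\<psi> $ q) * A $$ (q, p))"
  using assms unfolding mtrace_def
  by (auto simp: scalar_prod_def sum_distrib_left ac_simps intro!: sum.cong)

lemma idx_lt: "b < n \<Longrightarrow> j < k \<Longrightarrow> b*k+j < n*(k::nat)"
proof -
  assume "b < n" "j < k"
  then have "(b+1)*k \<le> n*k" by (intro mult_right_mono) auto
  then show ?thesis using \<open>j<k\<close> by simp
qed

lemma trace_tensor:
  assumes "A \<in> carrier_mat n n"
  shows "(\<Sum>p<n*k. \<Sum>q<n*k. \<psi> p * cnj (\<psi> q) * tensor_id k A $$ (q, p)) =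
     (\<Sum>i<k. Q n (\<lambda>a. \<psi> (a*k+i)) A)"
proof -
  have e: "tensor_id k A $$ (b*k+j, a*k+i) = (if j = i then A $$ (b, a) else 0)"
    if "a < n" "b < n" "i < k" "j < k" for a b i j
    using that assms idx_lt[OF that(1,3)] idx_lt[OF that(2,4)]
    by (simp add: tensor_id_def)
  have "(\<Sum>p<n*k. \<Sum>q<n*k. \<psi> p * cnj (\<psi> q) * tensor_id k A $$ (q, p))
     = (\<Sum>a<n. \<Sum>i<k. \<Sum>b<n. \<Sum>j<k. \<psi> (a*k+i) * cnj (\<psi> (b*k+j)) * tensor_id k A $$ (b*k+j, a*k+i))"
    by (simp add: sum_reindex_mult)
  also have "\<dots> = (\<Sum>a<n. \<Sum>i<k. \<Sum>b<n. \<psi> (a*k+i) * cnj (\<psi> (b*k+i)) * A $$ (b, a))"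
    by (intro sum.cong refl) (simp add: e if_distrib cong: if_cong)
  also have "\<dots> = (\<Sum>i<k. \<Sum>a<n. \<Sum>b<n. \<psi> (a*k+i) * cnj (\<psi> (b*k+i)) * A $$ (b, a))"
    by (rule sum.swap)
  finally show ?thesis by (simp add: Q_def)
qed


lemma Q_scale: "Q n (\<lambda>a. complex_of_real c * \<phi> a) A = complex_of_real (c^2) * Q n \<phi> A"
  unfolding Q_def by (simp add: sum_distrib_left power2_eq_square ac_simps)

lemma Q_cong: "(\<And>a. a < n \<Longrightarrow> \<phi> a = \<theta> a) \<Longrightarrow> Q n \<phi> A = Q n \<theta> A"
  unfolding Q_def by (intro sum.cong refl) auto

definition pm :: "nat \<Rightarrow> complex vec \<Rightarrow> complex mat" where
  "pm m \<psi> = mat m m (\<lambda>(i, j). \<psi> $ i * cnj (\<psi> $ j))"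

lemma pure_states_pm: "pure_states m = {pm m \<psi> | \<psi>. \<psi> \<in> carrier_vec m \<and> (\<Sum>i<m. (cmod (\<psi> $ i))\<^sup>2) = 1}"
  unfolding pure_states_def pm_def by simp

lemma dual_single:
  assumes "A \<in> carrier_mat n n"
  shows "Re (mtrace (pm n \<phi> * A)) = Re (Q n (\<lambda>a. \<phi> $ a) A)"
  unfolding pm_def trace_pure[OF assms] Q_def by simp

lemma tensor_carrier: "A \<in> carrier_mat n n \<Longrightarrow> tensor_id k A \<in> carrier_mat (n*k) (n*k)"
  unfolding tensor_id_def by auto

lemma dual_tensor:
  assumes "A \<in> carrier_mat n n"
  shows "Re (mtrace (pm (n*k) \<psi> * tensor_id k A)) = Re (\<Sum>i<k. Q n (\<lambda>a. \<psi> $ (a*k+i)) A)"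
  unfolding pm_def trace_pure[OF tensor_carrier[OF assms]] trace_tensor[OF assms, symmetric] by simp

theorem lemma2p38:
  fixes n k :: nat and \<iota> :: "'v::euclidean_space \<Rightarrow> complex mat" and W :: "complex mat"
  assumes "gen_functional_theory n \<iota> W"
    and "k > 0"
  shows "conv_k k (dual_map \<iota> ` pure_states n) =
         dual_map (\<lambda>v. tensor_id k (\<iota> v)) ` pure_states (n * k)"
proof -
  have car: "\<iota> v \<in> carrier_mat n n" for v
    using assms(1) unfolding gen_functional_theory_def hermitian_mat_def by blast
  show ?thesis
  proof
    show "conv_k k (dual_map \<iota> ` pure_states n) \<subseteq> dual_map (\<lambda>v. tensor_id k (\<iota> v)) ` pure_states (n * k)"
    proof
      fix f assume "f \<in> conv_k k (dual_map \<iota> ` pure_states n)"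
      then obtain s t where st: "\<forall>i<k. s i \<in> dual_map \<iota> ` pure_states n \<and> t i \<ge> 0"
        and t1: "(\<Sum>i<k. t i) = 1" and f: "f = (\<lambda>v. \<Sum>i<k. t i * s i v)"
        unfolding conv_k_def by blast
      have "\<forall>i\<in>{..<k}. \<exists>\<phi>. \<phi> \<in> carrier_vec n \<and> (\<Sum>a<n. (cmod (\<phi> $ a))\<^sup>2) = 1 \<and> s i = dual_map \<iota> (pm n \<phi>)"
        using st unfolding pure_states_pm by blast
      then obtain \<phi> where \<phi>: "\<And>i. i < k \<Longrightarrow> \<phi> i \<in> carrier_vec n \<and> (\<Sum>a<n. (cmod (\<phi> i $ a))\<^sup>2) = 1 \<and> s i = dual_map \<iota> (pm n (\<phi> i))"
        by (metis bchoice lessThan_iff)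
      define \<psi> where "\<psi> = vec (n*k) (\<lambda>p. complex_of_real (sqrt (t (p mod k))) * \<phi> (p mod k) $ (p div k))"
      have \<psi>i: "\<psi> $ (a*k+i) = complex_of_real (sqrt (t i)) * \<phi> i $ a" if "a < n" "i < k" for a i
        using idx_lt[OF that] that by (simp add: \<psi>_def)
      have "(\<Sum>p<n*k. (cmod (\<psi> $ p))\<^sup>2) = (\<Sum>a<n. \<Sum>i<k. (cmod (\<psi> $ (a*k+i)))\<^sup>2)"
        by (rule sum_reindex_mult)
      also have "\<dots> = (\<Sum>a<n. \<Sum>i<k. t i * (cmod (\<phi> i $ a))\<^sup>2)"
        using st by (intro sum.cong refl) (simp add: \<psi>i norm_mult power_mult_distrib)
      also have "\<dots> = (\<Sum>i<k. t i * (\<Sum>a<n. (cmod (\<phi> i $ a))\<^sup>2))"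
        by (simp add: sum.swap[of _ "{..<n}"] sum_distrib_left)
      also have "\<dots> = 1" using \<phi> t1 by simp
      finally have norm: "(\<Sum>p<n*k. (cmod (\<psi> $ p))\<^sup>2) = 1" .
      have "f = dual_map (\<lambda>v. tensor_id k (\<iota> v)) (pm (n*k) \<psi>)"
      proof
        fix v
        have "dual_map (\<lambda>v. tensor_id k (\<iota> v)) (pm (n*k) \<psi>) v = Re (\<Sum>i<k. Q n (\<lambda>a. \<psi> $ (a*k+i)) (\<iota> v))"
          unfolding dual_map_def dual_tensor[OF car] ..
        also have "\<dots> = Re (\<Sum>i<k. complex_of_real (t i) * Q n (\<lambda>a. \<phi> i $ a) (\<iota> v))"
        proof (intro arg_cong[where f=Re] sum.cong refl)
          fix i assume i: "i \<in> {..<k}"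
          have "Q n (\<lambda>a. \<psi> $ (a*k+i)) (\<iota> v) = Q n (\<lambda>a. complex_of_real (sqrt (t i)) * \<phi> i $ a) (\<iota> v)"
            using i by (intro Q_cong) (simp add: \<psi>i)
          also have "\<dots> = complex_of_real (t i) * Q n (\<lambda>a. \<phi> i $ a) (\<iota> v)"
            using st i by (simp add: Q_scale)
          finally show "Q n (\<lambda>a. \<psi> $ (a*k+i)) (\<iota> v) = complex_of_real (t i) * Q n (\<lambda>a. \<phi> i $ a) (\<iota> v)" .
        qed
        also have "\<dots> = (\<Sum>i<k. t i * s i v)"
          using \<phi> by (simp add: Re_sum dual_map_def dual_single[OF car])
        finally show "f v = dual_map (\<lambda>v. tensor_id k (\<iota> v)) (pm (n*k) \<psi>) v" using f by simp
      qed
      moreover have "pm (n*k) \<psi> \<in> pure_states (n*k)"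
        unfolding pure_states_pm using norm by (auto simp: \<psi>_def)
      ultimately show "f \<in> dual_map (\<lambda>v. tensor_id k (\<iota> v)) ` pure_states (n * k)" by blast
    qed
  next
    show "dual_map (\<lambda>v. tensor_id k (\<iota> v)) ` pure_states (n * k) \<subseteq> conv_k k (dual_map \<iota> ` pure_states n)"
    proof
      fix f assume "f \<in> dual_map (\<lambda>v. tensor_id k (\<iota> v)) ` pure_states (n * k)"
      then obtain \<psi> where \<psi>: "\<psi> \<in> carrier_vec (n*k)" and norm: "(\<Sum>p<n*k. (cmod (\<psi> $ p))\<^sup>2) = 1"
        and f: "f = dual_map (\<lambda>v. tensor_id k (\<iota> v)) (pm (n*k) \<psi>)"
        unfolding pure_states_pm by blast
      have n0: "n > 0" using norm by (cases n) auto
      define t where "t i = (\<Sum>a<n. (cmod (\<psi> $ (a*k+i)))\<^sup>2)" for i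
      define \<phi> where "\<phi> i = (if t i = 0 then unit_vec n 0 else vec n (\<lambda>a. \<psi> $ (a*k+i) / complex_of_real (sqrt (t i))))" for i
      have t0: "t i \<ge> 0" for i unfolding t_def by (intro sum_nonneg) auto
      have t1: "(\<Sum>i<k. t i) = 1"
        using norm unfolding t_def sum_reindex_mult by (simp add: sum.swap[of _ "{..<n}"])
      have \<phi>c: "\<phi> i \<in> carrier_vec n" for i unfolding \<phi>_def by auto
      have \<phi>n: "(\<Sum>a<n. (cmod (\<phi> i $ a))\<^sup>2) = 1" for i
      proof (cases "t i = 0")
        case True
        have "(\<Sum>a<n. (cmod (\<phi> i $ a))\<^sup>2) = (\<Sum>a<n. if a = 0 then 1 else 0)"
          using True by (intro sum.cong refl) (auto simp: \<phi>_def unit_vec_def)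
        also have "\<dots> = 1" using n0 by simp
        finally show ?thesis .
      next
        case False
        have "(\<Sum>a<n. (cmod (\<phi> i $ a))\<^sup>2) = (\<Sum>a<n. (cmod (\<psi> $ (a*k+i)))\<^sup>2 / t i)"
          using False t0[of i] by (intro sum.cong refl) (auto simp: \<phi>_def norm_divide power_divide)
        also have "\<dots> = 1" using False by (simp add: t_def sum_divide_distrib[symmetric])
        finally show ?thesis .
      qed
      have Qeq: "Q n (\<lambda>a. \<psi> $ (a*k+i)) A = complex_of_real (t i) * Q n (\<lambda>a. \<phi> i $ a) A" for i A
      proof (cases "t i = 0")
        case True
        have "\<forall>a\<in>{..<n}. (cmod (\<psi> $ (a*k+i)))\<^sup>2 = 0"
          using True unfolding t_def by (subst sum_nonneg_eq_0_iff[symmetric]) auto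
        then have "Q n (\<lambda>a. \<psi> $ (a*k+i)) A = Q n (\<lambda>a. 0) A" by (intro Q_cong) auto
        then show ?thesis using True by (simp add: Q_def)
      next
        case False
        have "Q n (\<lambda>a. \<psi> $ (a*k+i)) A = Q n (\<lambda>a. complex_of_real (sqrt (t i)) * \<phi> i $ a) A"
          using False t0[of i] by (intro Q_cong) (simp add: \<phi>_def)
        then show ?thesis using t0[of i] by (simp add: Q_scale)
      qed
      show "f \<in> conv_k k (dual_map \<iota> ` pure_states n)"
        unfolding conv_k_def
      proof (intro CollectI exI conjI allI impI)
        fix i assume "i < k"
        show "dual_map \<iota> (pm n (\<phi> i)) \<in> dual_map \<iota> ` pure_states n"
          unfolding pure_states_pm using \<phi>c \<phi>n by blast
        show "t i \<ge> 0" by (rule t0)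
      next
        show "(\<Sum>i<k. t i) = 1" by (rule t1)
        show "f = (\<lambda>v. \<Sum>i<k. t i * dual_map \<iota> (pm n (\<phi> i)) v)"
          unfolding f dual_map_def dual_tensor[OF car] dual_single[OF car] Qeq
          by (simp add: Re_sum)
      qed
    qed
  qed
qed

end
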